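(* Let $\bar D=\bar\gamma I$ be an isotropic $3\times3$ diffusion tensor, let $b>0$, $\rho>0$, $\eta>0$, and let $w:(0,\infty)\to[0,\infty)$ be the Rician Fisher-information weight function. For a probability measure $s$ on the unit sphere $\mathcal S^2\subset\mathbb R^3$, define the $6\times6$ matrix (indexed by pairs $i\le j$, $l\le r$) $$J(s)=\Big[(2-\delta_{ij})(2-\delta_{lr})\int_{\mathcal S^2}w\big(\exp(-b\,u\bar Du^{\top})\rho/\eta\big)u_iu_ju_lu_r\,s(du)\Big]_{i\le j,\ l\le r}.$$ Then the uniform probability measure $\sigma$ on $\mathcal S^2$ maximizes $\det J(s)$ among all probability measures $s$ on $\mathcal S^2$.
   Context: The weight function is $w(z)=\frac{\exp(-z^2/2)}{z^2}\int_0^\infty x^3\exp\big(-\frac{x^2}{2z^2}\big)\frac{I_1(x)^2}{I_0(x)}dx-z^4\ge0$, where $I_\ell$ is the modified Bessel function of the first kind of order $\ell$; $J(s)$ is the (limiting, per-measurement) Fisher information for the tensor parameter $D$ in the Rician model with signal $S=\rho\exp(-gDg^{\top})$ and gradients $g=\sqrt b\,u$, $u\sim s$. *)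

theory Defs
  imports "HOL-Probability.Probability"
begin

definition besselI :: "nat \<Rightarrow> real \<Rightarrow> real" where
  "besselI \<nu> x = (\<Sum>k. (x / 2) ^ (2 * k + \<nu>) / (fact k * fact (k + \<nu>)))"

definition rician_w :: "real \<Rightarrow> real" where
  "rician_w z = exp (- z\<^sup>2 / 2) / z\<^sup>2 *
      (LBINT x:{0<..}. x ^ 3 * exp (- x\<^sup>2 / (2 * z\<^sup>2)) * (besselI 1 x)\<^sup>2 / besselI 0 x)
    - z ^ 4"

definition S2_space :: "(real^3) measure" where
  "S2_space = restrict_space borel (sphere 0 1)"

text \<open>Uniform probability measure on S^2: radial projection of the normalized
  Lebesgue measure on the unit ball (the origin, a null set, is sent to e_1).\<close>
definition sphere_uniform :: "(real^3) measure" where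
  "sphere_uniform = distr (uniform_measure lborel (ball 0 1)) S2_space
     (\<lambda>x. if x = 0 then axis 1 1 else x /\<^sub>R norm x)"

definition pidx :: "6 \<Rightarrow> 3 \<times> 3" where
  "pidx k = (if k = 1 then (1,1) else if k = 2 then (1,2) else if k = 3 then (1,3)
             else if k = 4 then (2,2) else if k = 5 then (2,3) else (3,3))"

definition kdelta :: "3 \<Rightarrow> 3 \<Rightarrow> real" where
  "kdelta i j = (if i = j then 1 else 0)"

definition Jmat :: "real \<Rightarrow> real \<Rightarrow> real \<Rightarrow> real^3^3 \<Rightarrow> (real^3) measure \<Rightarrow> real^6^6" where
  "Jmat b \<rho> \<eta> D s = (\<chi> p q. case pidx p of (i, j) \<Rightarrow> case pidx q of (l, r) \<Rightarrow>
      (2 - kdelta i j) * (2 - kdelta l r) *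
      (\<integral>u. rician_w (exp (- b * (u \<bullet> (D *v u))) * \<rho> / \<eta>) * (u$i) * (u$j) * (u$l) * (u$r) \<partial>s))"

end

theory Submission
  imports Defs
begin


definition psd :: "real^'n^'n \<Rightarrow> bool" where
  "psd P \<longleftrightarrow> (\<forall>x. 0 \<le> x \<bullet> (P *v x))"

lemma axis_quad: "axis i (1::real) \<bullet> (P *v axis j 1) = P$i$j"
  by (simp add: matrix_vector_mult_basis inner_axis' column_def)

lemma psd_diag: "psd P \<Longrightarrow> 0 \<le> P$i$i"
  using axis_quad[of i P i] unfolding psd_def by metis

lemma psd_zero_row:
  assumes "psd P" "transpose P = P" "P$k$k = 0"
  shows "P$k$l = 0"
proof (rule ccontr)
  assume ne: "P$k$l \<noteq> 0"
  then have lk: "l \<noteq> k" using assms by auto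
  have sym: "P$l$k = P$k$l" using assms(2) by (metis transpose_def vec_lambda_beta)
  define a where "a = - (P$l$l + 1) / (2 * P$k$l)"
  define x where "x = a *\<^sub>R axis k (1::real) + axis l 1"
  have "x \<bullet> (P *v x) = a * a * P$k$k + a * P$k$l + a * P$l$k + P$l$l"
    unfolding x_def
    by (simp add: matrix_vector_right_distrib matrix_vector_mult_scaleR inner_add_left
        inner_add_right axis_quad algebra_simps)
  also have "\<dots> = -1" using ne sym assms(3) by (simp add: a_def field_simps)
  finally show False using assms(1) unfolding psd_def by (metis neg_0_le_iff_le not_one_le_zero)
qed




definition elimc :: "real^'n^'n \<Rightarrow> 'n \<Rightarrow> 'n \<Rightarrow> real" where
  "elimc P k i = (if i = k then 0 else P$i$k / P$k$k)"

definition elimE :: "real^'n^'n \<Rightarrow> 'n \<Rightarrow> real^'n^'n" where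
  "elimE P k = (\<chi> i j. (if i = j then 1 else 0) - (if j = k then elimc P k i else 0))"

lemma elimE_mult_left: "(elimE P k ** X)$i$j = X$i$j - elimc P k i * X$k$j"
proof -
  have "(elimE P k ** X)$i$j = (\<Sum>m\<in>UNIV. (if i = m then X$m$j else 0) - (if m = k then elimc P k i * X$m$j else 0))"
    unfolding elimE_def matrix_matrix_mult_def by (auto simp: left_diff_distrib intro!: sum.cong)
  also have "\<dots> = X$i$j - elimc P k i * X$k$j"
    by (simp add: sum_subtractf)
  finally show ?thesis .
qed

lemma elimE_mult_right: "(X ** transpose (elimE P k))$i$j = X$i$j - elimc P k j * X$i$k"
proof -
  have "(X ** transpose (elimE P k))$i$j = (\<Sum>m\<in>UNIV. (if j = m then X$i$m else 0) - (if m = k then elimc P k j * X$i$m else 0))"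
    unfolding elimE_def transpose_def matrix_matrix_mult_def by (auto simp: right_diff_distrib intro!: sum.cong)
  also have "\<dots> = X$i$j - elimc P k j * X$i$k"
    by (simp add: sum_subtractf)
  finally show ?thesis .
qed

lemma det_elimE: fixes P :: "real^'n^'n" shows "det (elimE P k) = 1"
proof -
  define av where "av = (\<chi> i. elimc P k i)"
  have tr: "transpose (elimE P k) = (\<chi> i. if i = k then row k (mat 1) + (- av) else row i (mat 1))"
    by (simp add: elimE_def transpose_def av_def row_def mat_def vec_eq_iff elimc_def)
  have "- av = (\<Sum>j\<in>UNIV - {k}. (- av$j) *s row j (mat 1))"
  proof -
    have "(\<Sum>j\<in>UNIV - {k}. (- av$j) * (row j (mat 1) :: real^'n)$i) = - av$i" for i
    proof -
      have "(\<Sum>j\<in>UNIV - {k}. (- av$j) * (row j (mat 1) :: real^'n)$i) = (\<Sum>j\<in>UNIV - {k}. if j = i then - av$i else 0)"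
        by (rule sum.cong) (auto simp: row_def mat_def)
      also have "\<dots> = - av$i" by (simp add: av_def elimc_def)
      finally show ?thesis .
    qed
    then show ?thesis by (simp add: vec_eq_iff sum_component)
  qed
  also have "\<dots> \<in> vec.span {row j (mat 1) |j. j \<noteq> k}"
    by (intro vec.span_sum vec.span_scale vec.span_base) auto
  finally have "det (transpose (elimE P k)) = det (mat 1 :: real^'n^'n)"
    unfolding tr by (rule det_row_span)
  then show ?thesis by simp
qed




lemma psd_congr:
  fixes P E :: "real^'n^'n"
  assumes "psd P" shows "psd (E ** P ** transpose E)"
  unfolding psd_def
proof
  fix x :: "real^'n"
  have "x \<bullet> ((E ** P ** transpose E) *v x) = (transpose E *v x) \<bullet> (P *v (transpose E *v x))"
    by (metis dot_lmul_matrix matrix_vector_mul_assoc transpose_transpose vector_transpose_matrix)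
  then show "0 \<le> x \<bullet> ((E ** P ** transpose E) *v x)" using assms unfolding psd_def by simp
qed

lemma hadamard_aux:
  fixes S :: "'n::finite set"
  assumes "finite S"
  shows "\<forall>P::real^'n^'n. transpose P = P \<and> psd P \<and> (\<forall>j. j \<notin> S \<longrightarrow> (\<forall>l. l \<noteq> j \<longrightarrow> P$j$l = 0))
           \<longrightarrow> det P \<le> (\<Prod>i\<in>UNIV. P$i$i)"
  using assms
proof (induction S rule: finite_induct)
  case empty
  show ?case by (auto simp: det_diagonal)
next
  case (insert k S)
  show ?case
  proof (intro allI impI, elim conjE)
    fix P :: "real^'n^'n"
    assume sym: "transpose P = P" and ps: "psd P"
      and rows: "\<forall>j. j \<notin> insert k S \<longrightarrow> (\<forall>l. l \<noteq> j \<longrightarrow> P$j$l = 0)"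
    have symP: "P$i$j = P$j$i" for i j using sym by (metis transpose_def vec_lambda_beta)
    have dnn: "0 \<le> (\<Prod>i\<in>UNIV. P$i$i)" by (intro prod_nonneg) (simp add: psd_diag ps)
    show "det P \<le> (\<Prod>i\<in>UNIV. P$i$i)"
    proof (cases "P$k$k = 0")
      case True
      then have "row k P = 0" using psd_zero_row[OF ps sym True] by (simp add: row_def vec_eq_iff)
      then have "det P = 0" by (rule det_zero_row)
      then show ?thesis using dnn by simp
    next
      case False
      define E where "E = elimE P k"
      define Q where "Q = E ** P ** transpose E"
      have Qe: "Q$i$j = (P$i$j - elimc P k i * P$k$j) - elimc P k j * (P$i$k - elimc P k i * P$k$k)" for i j
        unfolding Q_def E_def by (simp add: elimE_mult_right elimE_mult_left)
      have symQ: "transpose Q = Q" unfolding Q_def using sym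
        by (simp add: matrix_transpose_mul matrix_mul_assoc)
      have psQ: "psd Q" unfolding Q_def by (rule psd_congr[OF ps])
      have detQ: "det Q = det P" unfolding Q_def E_def by (simp add: det_mul det_elimE)
      have rowsQ: "\<forall>j. j \<notin> S \<longrightarrow> (\<forall>l. l \<noteq> j \<longrightarrow> Q$j$l = 0)"
      proof (intro allI impI)
        fix j l assume j: "j \<notin> S" and lj: "l \<noteq> j"
        show "Q$j$l = 0"
        proof (cases "j = k")
          case True
          then show ?thesis using lj False by (simp add: Qe elimc_def symP field_simps)
        next
          case jk: False
          then have "P$j$l' = 0" if "l' \<noteq> j" for l' using rows j that by auto
          then have "P$j$k = 0" "P$j$l = 0" using jk lj by auto
          then show ?thesis using jk by (simp add: Qe elimc_def)
        qed
      qed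
      have "det Q \<le> (\<Prod>i\<in>UNIV. Q$i$i)" using insert.IH symQ psQ rowsQ by blast
      also have "\<dots> \<le> (\<Prod>i\<in>UNIV. P$i$i)"
      proof (rule prod_mono, rule conjI)
        fix i
        show "0 \<le> Q$i$i" by (rule psd_diag[OF psQ])
        have "P$k$k > 0" using psd_diag[OF ps, of k] False by simp
        then show "Q$i$i \<le> P$i$i"
          by (cases "i = k") (auto simp: Qe elimc_def symP[of k i] field_simps power2_eq_square)
      qed
      finally show ?thesis using detQ by simp
    qed
  qed
qed

lemma hadamard:
  fixes P :: "real^'n^'n"
  assumes "transpose P = P" "psd P"
  shows "det P \<le> (\<Prod>i\<in>UNIV. P$i$i)"
  using hadamard_aux[of "UNIV :: 'n set"] assms by auto




lemma amgm_simple: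
  fixes y :: "'a \<Rightarrow> real"
  assumes "finite A" "\<And>a. a \<in> A \<Longrightarrow> 0 \<le> y a" "(\<Sum>a\<in>A. y a) = real (card A)"
  shows "(\<Prod>a\<in>A. y a) \<le> 1"
proof -
  have "(\<Prod>a\<in>A. y a) \<le> (\<Prod>a\<in>A. exp (y a - 1))"
  proof (rule prod_mono)
    fix a assume "a \<in> A"
    show "0 \<le> y a \<and> y a \<le> exp (y a - 1)"
      using assms(2)[OF \<open>a\<in>A\<close>] exp_ge_add_one_self[of "y a - 1"] by simp
  qed
  also have "\<dots> = exp (\<Sum>a\<in>A. (y a - 1))" by (simp add: exp_sum assms(1))
  also have "(\<Sum>a\<in>A. (y a - 1)) = 0" using assms(3) by (simp add: sum_subtractf)
  finally show ?thesis by simp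
qed




lemma space_S2: "space S2_space = sphere 0 1"
  by (simp add: S2_space_def space_restrict_space)

lemma cont_meas_S2:
  fixes f :: "real^3 \<Rightarrow> real"
  assumes "continuous_on UNIV f"
  shows "f \<in> borel_measurable S2_space"
  unfolding S2_space_def
  by (intro measurable_restrict_space1 borel_measurable_continuous_onI assms)

lemma integrable_S2:
  fixes f :: "real^3 \<Rightarrow> real"
  assumes "finite_measure s" "sets s = sets S2_space" "continuous_on UNIV f"
  shows "integrable s f"
proof -
  have sp: "space s = sphere 0 1" using assms(2) space_S2 by (metis sets_eq_imp_space_eq)
  have "compact (f ` sphere 0 1)"
    by (intro compact_continuous_image continuous_on_subset[OF assms(3)]) auto
  then obtain B where B: "\<And>x. x \<in> sphere 0 1 \<Longrightarrow> norm (f x) \<le> B"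
    by (meson bounded_iff compact_imp_bounded imageI)
  have m: "f \<in> borel_measurable s"
    using cont_meas_S2[OF assms(3)] measurable_cong_sets[OF assms(2) refl] by blast
  show ?thesis
    by (rule finite_measure.integrable_const_bound[OF assms(1) _ m, of B])
       (use B sp in auto)
qed

definition proj :: "real^3 \<Rightarrow> real^3" where
  "proj x = (if x = 0 then axis 1 1 else x /\<^sub>R norm x)"

definition Ub :: "(real^3) measure" where
  "Ub = uniform_measure lborel (ball 0 1)"

lemma sphere_uniform_alt: "sphere_uniform = distr Ub S2_space proj"
  by (simp add: sphere_uniform_def Ub_def proj_def[abs_def])

lemma prob_Ub: "prob_space Ub"
  unfolding Ub_def
proof (rule prob_space_uniform_measure)
  have "unit_ball_vol 3 > 0" by (rule unit_ball_vol_pos) simp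
  then have h: "unit_ball_vol 3 \<noteq> 0" by linarith
  then show "emeasure lborel (ball (0::real^3) 1) \<noteq> 0" "emeasure lborel (ball (0::real^3) 1) \<noteq> \<infinity>"
    by (simp_all only: emeasure_ball) (use h in auto)
qed

lemma proj_meas: "proj \<in> Ub \<rightarrow>\<^sub>M S2_space"
  unfolding S2_space_def
proof (rule measurable_restrict_space2)
  show "proj \<in> space Ub \<rightarrow> sphere 0 1" by (auto simp: proj_def)
  show "proj \<in> Ub \<rightarrow>\<^sub>M borel" unfolding Ub_def proj_def
    by (simp add: measurable_lborel1) measurable
qed

lemma prob_sigma: "prob_space sphere_uniform"
  unfolding sphere_uniform_alt
  by (rule prob_space.prob_space_distr[OF prob_Ub proj_meas])

lemma sets_sigma: "sets sphere_uniform = sets S2_space"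
  unfolding sphere_uniform_alt by simp




lemma lborel_orth_image:
  fixes R :: "real^3^3" and X :: "(real^3) set"
  assumes R: "orthogonal_matrix R" and X: "X \<in> sets borel" "bounded X"
  shows "emeasure lborel ((\<lambda>x. R *v x) ` X) = emeasure lborel X"
proof -
  have ot: "orthogonal_transformation (\<lambda>x. R *v x)"
    using R by (simp add: orthogonal_transformation_matrix matrix_vector_mul_linear)
  have Xl: "X \<in> lmeasurable" using X by (intro bounded_set_imp_lmeasurable) auto
  have img: "(\<lambda>x. R *v x) ` X \<in> lmeasurable" by (rule measurable_orthogonal_image[OF ot Xl])
  have bI: "bounded ((\<lambda>x. R *v x) ` X)"
    using X(2) by (intro bounded_linear_image) (simp_all add: matrix_vector_mul_bounded_linear)
  have Ib: "(\<lambda>x. R *v x) ` X \<in> sets borel"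
  proof -
    have "(\<lambda>x. R *v x) ` X = (\<lambda>x. transpose R *v x) -` X"
    proof (intro equalityI subsetI)
      fix y assume "y \<in> (\<lambda>x. R *v x) ` X"
      then obtain x where "x \<in> X" "y = R *v x" by blast
      moreover have "transpose R *v (R *v x) = x"
        by (metis R matrix_vector_mul_assoc matrix_vector_mul_lid orthogonal_matrix_def)
      ultimately show "y \<in> (\<lambda>x. transpose R *v x) -` X" by simp
    next
      fix y assume "y \<in> (\<lambda>x. transpose R *v x) -` X"
      then have "transpose R *v y \<in> X" by simp
      moreover have "y = R *v (transpose R *v y)"
        by (metis R matrix_vector_mul_assoc matrix_vector_mul_lid orthogonal_matrix_def)
      ultimately show "y \<in> (\<lambda>x. R *v x) ` X" by blast
    qed
    also have "\<dots> \<in> sets borel"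
    proof -
      have m: "(\<lambda>x. transpose R *v x) \<in> borel \<rightarrow>\<^sub>M borel"
        by (intro borel_measurable_continuous_onI linear_continuous_on matrix_vector_mul_bounded_linear)
      show ?thesis using measurable_sets[OF m X(1)] by simp
    qed
    finally show ?thesis .
  qed
  have "emeasure lborel ((\<lambda>x. R *v x) ` X) = ennreal (measure lborel ((\<lambda>x. R *v x) ` X))"
    using emeasure_bounded_finite[OF bI] by (intro emeasure_eq_ennreal_measure) simp
  also have "measure lborel ((\<lambda>x. R *v x) ` X) = measure lebesgue ((\<lambda>x. R *v x) ` X)"
    using Ib by simp
  also have "\<dots> = measure lebesgue X" by (rule measure_orthogonal_image[OF ot Xl])
  also have "\<dots> = measure lborel X" using X by simp
  also have "ennreal \<dots> = emeasure lborel X"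
    using emeasure_bounded_finite[OF X(2)] by (intro emeasure_eq_ennreal_measure[symmetric]) simp
  finally show ?thesis .
qed




lemma orth_norm:
  fixes Q :: "real^3^3"
  assumes "orthogonal_matrix Q" shows "norm (Q *v x) = norm x"
  using assms by (simp add: orthogonal_transformation_matrix matrix_vector_mul_linear orthogonal_transformation_norm)

lemma Ub_inv:
  fixes R :: "real^3^3"
  assumes R: "orthogonal_matrix R"
  shows "distr Ub borel (\<lambda>x. R *v x) = Ub"
proof (rule measure_eqI)
  show "sets (distr Ub borel (\<lambda>x. R *v x)) = sets Ub" by (simp add: Ub_def)
next
  fix A assume "A \<in> sets (distr Ub borel (\<lambda>x. R *v x))"
  then have A: "A \<in> sets borel" by simp
  have m: "(\<lambda>x. R *v x) \<in> borel \<rightarrow>\<^sub>M borel"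
    by (intro borel_measurable_continuous_onI linear_continuous_on matrix_vector_mul_bounded_linear)
  have mU: "(\<lambda>x. R *v x) \<in> Ub \<rightarrow>\<^sub>M borel"
    using m by (simp add: Ub_def measurable_lborel1)
  have pre: "(\<lambda>x. R *v x) -` A \<in> sets borel" using measurable_sets[OF m A] by simp
  have eq: "ball 0 1 \<inter> (\<lambda>x. R *v x) -` A = (\<lambda>x. transpose R *v x) ` (ball 0 1 \<inter> A)"
  proof (intro equalityI subsetI)
    fix y assume y: "y \<in> ball 0 1 \<inter> (\<lambda>x. R *v x) -` A"
    have "transpose R *v (R *v y) = y"
      by (metis R matrix_vector_mul_assoc matrix_vector_mul_lid orthogonal_matrix_def)
    moreover have "norm (R *v y) = norm y"
      using R by (simp add: orthogonal_transformation_matrix matrix_vector_mul_linear orthogonal_transformation_norm)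
    ultimately show "y \<in> (\<lambda>x. transpose R *v x) ` (ball 0 1 \<inter> A)" using y
      by (metis (no_types, lifting) IntD1 IntD2 IntI image_eqI mem_ball_0 vimageE)
  next
    fix y assume "y \<in> (\<lambda>x. transpose R *v x) ` (ball 0 1 \<inter> A)"
    then obtain x where x: "x \<in> ball 0 1" "x \<in> A" "y = transpose R *v x" by blast
    have "R *v y = x" unfolding x(3)
      by (metis R matrix_vector_mul_assoc matrix_vector_mul_lid orthogonal_matrix_def)
    moreover have "norm y = norm x"
      using orth_norm[of "transpose R" x] R x(3) by simp
    ultimately show "y \<in> ball 0 1 \<inter> (\<lambda>x. R *v x) -` A" using x by auto
  qed
  have "emeasure (distr Ub borel (\<lambda>x. R *v x)) A = emeasure Ub ((\<lambda>x. R *v x) -` A \<inter> space Ub)"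
    by (rule emeasure_distr[OF mU A])
  also have "\<dots> = emeasure lborel (ball 0 1 \<inter> (\<lambda>x. R *v x) -` A) / emeasure lborel (ball (0::real^3) 1)"
    unfolding Ub_def using pre by (subst emeasure_uniform_measure) auto
  also have "emeasure lborel (ball 0 1 \<inter> (\<lambda>x. R *v x) -` A) = emeasure lborel (ball 0 1 \<inter> A)"
    unfolding eq
    by (rule lborel_orth_image) (use R A in \<open>auto intro: bounded_subset[OF bounded_ball]\<close>)
  also have "emeasure lborel (ball 0 1 \<inter> A) / emeasure lborel (ball (0::real^3) 1) = emeasure Ub A"
    unfolding Ub_def using A by (subst emeasure_uniform_measure) auto
  finally show "emeasure (distr Ub borel (\<lambda>x. R *v x)) A = emeasure Ub A" .
qed

lemma AE_Ub_nz: "AE x in Ub. x \<noteq> 0"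
  unfolding Ub_def
  by (rule AE_uniform_measureI) (auto intro: eventually_mono[OF AE_lborel_singleton[of 0]])

lemma proj_orth:
  fixes R :: "real^3^3"
  assumes R: "orthogonal_matrix R" and x: "x \<noteq> 0"
  shows "proj (R *v x) = R *v proj x"
proof -
  have n: "norm (R *v x) = norm x"
    using R by (simp add: orthogonal_transformation_matrix matrix_vector_mul_linear orthogonal_transformation_norm)
  then have "R *v x \<noteq> 0" using x by auto
  then show ?thesis using x n by (simp add: proj_def matrix_vector_mult_scaleR)
qed

lemma integral_sigma:
  fixes g :: "real^3 \<Rightarrow> real"
  assumes "continuous_on UNIV g"
  shows "integral\<^sup>L sphere_uniform g = integral\<^sup>L Ub (\<lambda>x. g (proj x))"
  unfolding sphere_uniform_alt
  by (rule integral_distr[OF proj_meas cont_meas_S2[OF assms]])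

lemma sigma_inv:
  fixes R :: "real^3^3" and g :: "real^3 \<Rightarrow> real"
  assumes R: "orthogonal_matrix R" and g: "continuous_on UNIV g"
  shows "integral\<^sup>L sphere_uniform (\<lambda>u. g (R *v u)) = integral\<^sup>L sphere_uniform g"
proof -
  have gR: "continuous_on UNIV (\<lambda>u. g (R *v u))"
    by (intro continuous_on_compose2[OF g] linear_continuous_on matrix_vector_mul_bounded_linear) auto
  have gp: "(\<lambda>x. g (proj x)) \<in> borel_measurable borel"
  proof -
    have "(\<lambda>x. g (proj x)) \<in> borel_measurable Ub"
      using measurable_comp[OF proj_meas cont_meas_S2[OF g]] by (simp add: o_def)
    then show ?thesis by (simp add: Ub_def measurable_lborel1)
  qed
  have m: "(\<lambda>x. R *v x) \<in> borel \<rightarrow>\<^sub>M borel"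
    by (intro borel_measurable_continuous_onI linear_continuous_on matrix_vector_mul_bounded_linear)
  have mU: "(\<lambda>x. R *v x) \<in> Ub \<rightarrow>\<^sub>M borel"
    using m by (simp add: Ub_def measurable_lborel1)
  have "integral\<^sup>L sphere_uniform g = integral\<^sup>L Ub (\<lambda>x. g (proj x))" by (rule integral_sigma[OF g])
  also have "\<dots> = integral\<^sup>L (distr Ub borel (\<lambda>x. R *v x)) (\<lambda>x. g (proj x))" by (simp add: Ub_inv[OF R])
  also have "\<dots> = integral\<^sup>L Ub (\<lambda>x. g (proj (R *v x)))" by (rule integral_distr[OF mU gp])
  also have "\<dots> = integral\<^sup>L Ub (\<lambda>x. g (R *v proj x))"
  proof (rule integral_cong_AE)
    show "(\<lambda>x. g (proj (R *v x))) \<in> borel_measurable Ub" by (rule measurable_compose[OF mU gp])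
    show "(\<lambda>x. g (R *v proj x)) \<in> borel_measurable Ub"
      using measurable_compose[OF proj_meas cont_meas_S2[OF gR]] .
    show "AE x in Ub. g (proj (R *v x)) = g (R *v proj x)"
      by (rule eventually_mono[OF AE_Ub_nz]) (simp add: proj_orth[OF R])
  qed
  also have "\<dots> = integral\<^sup>L sphere_uniform (\<lambda>u. g (R *v u))" by (rule integral_sigma[OF gR, symmetric])
  finally show ?thesis ..
qed




abbreviation E :: "(real^3 \<Rightarrow> real) \<Rightarrow> real" where
  "E f \<equiv> integral\<^sup>L sphere_uniform f"

definition mon3 :: "nat \<Rightarrow> nat \<Rightarrow> nat \<Rightarrow> real^3 \<Rightarrow> real" where
  "mon3 a b c u = (u$1)^a * (u$2)^b * (u$3)^c"

lemma cont_mon3 [continuous_intros]: "continuous_on S (mon3 a b c)"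
  unfolding mon3_def[abs_def] by (intro continuous_intros)

lemma int_sigma: "continuous_on UNIV (f::real^3\<Rightarrow>real) \<Longrightarrow> integrable sphere_uniform f"
  by (rule integrable_S2[OF prob_space.finite_measure[OF prob_sigma] sets_sigma])

lemma int_mon3 [simp]: "integrable sphere_uniform (mon3 a b c)"
  by (rule int_sigma) (rule cont_mon3)

lemma int_mon3' [simp]: "integrable sphere_uniform (\<lambda>u. mon3 a b c u)"
  by (rule int_sigma) (rule cont_mon3)

lemmas Esimps = integral_add integral_diff integral_mult_right integrable_add integrable_diff
  integrable_mult_right

lemma space_sigma: "space sphere_uniform = sphere 0 1"
  using sets_sigma space_S2 by (metis sets_eq_imp_space_eq)

lemma sph3: "u \<in> sphere (0::real^3) 1 \<Longrightarrow> (u$1)^2 + (u$2)^2 + (u$3)^2 = 1"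
proof -
  assume "u \<in> sphere (0::real^3) 1"
  then have "u \<bullet> u = 1" by (simp add: dot_square_norm)
  then show ?thesis by (simp add: inner_vec_def sum_3 power2_eq_square)
qed

lemma Econg: assumes "\<And>u. u \<in> sphere 0 1 \<Longrightarrow> f u = g u" shows "E f = E g"
  using assms by (intro Bochner_Integration.integral_cong) (auto simp: space_sigma)

lemma E_one: "E (\<lambda>u. 1) = 1"
  using prob_space.prob_space[OF prob_sigma] by simp

lemma E_zero_by:
  assumes "orthogonal_matrix R" "continuous_on UNIV h" "\<And>u. h (R *v u) = - h u"
  shows "E h = 0"
  using sigma_inv[OF assms(1,2)] assms(3) by simp

lemma E_eq_by:
  assumes "orthogonal_matrix R" "continuous_on UNIV h1" "\<And>u. h1 (R *v u) = h2 u"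
  shows "E h2 = E h1"
  using sigma_inv[OF assms(1,2)] assms(3) by simp

definition F1 :: "real^3^3" where "F1 = vector [vector [-1,0,0], vector [0,1,0], vector [0,0,1]]"
definition F2 :: "real^3^3" where "F2 = vector [vector [1,0,0], vector [0,-1,0], vector [0,0,1]]"
definition S12 :: "real^3^3" where "S12 = vector [vector [0,1,0], vector [1,0,0], vector [0,0,1]]"
definition S13 :: "real^3^3" where "S13 = vector [vector [0,0,1], vector [0,1,0], vector [1,0,0]]"
definition S23 :: "real^3^3" where "S23 = vector [vector [1,0,0], vector [0,0,1], vector [0,1,0]]"
definition R45 :: "real^3^3" where
  "R45 = vector [vector [1/sqrt 2, -1/sqrt 2, 0], vector [1/sqrt 2, 1/sqrt 2, 0], vector [0,0,1]]"

lemmas mat_simps = matrix_vector_mult_def sum_3 transpose_def matrix_matrix_mult_def mat_def vec_eq_iff forall_3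

lemma orth_F1: "orthogonal_matrix F1" by (simp add: orthogonal_matrix F1_def mat_simps)
lemma orth_F2: "orthogonal_matrix F2" by (simp add: orthogonal_matrix F2_def mat_simps)
lemma orth_S12: "orthogonal_matrix S12" by (simp add: orthogonal_matrix S12_def mat_simps)
lemma orth_S13: "orthogonal_matrix S13" by (simp add: orthogonal_matrix S13_def mat_simps)
lemma orth_S23: "orthogonal_matrix S23" by (simp add: orthogonal_matrix S23_def mat_simps)
lemma orth_R45: "orthogonal_matrix R45"
  by (simp add: orthogonal_matrix R45_def mat_simps power2_eq_square[symmetric])

lemma F1v: "(F1 *v u)$1 = - u$1" "(F1 *v u)$2 = u$2" "(F1 *v u)$3 = u$3" by (simp_all add: F1_def mat_simps)
lemma F2v: "(F2 *v u)$1 = u$1" "(F2 *v u)$2 = - u$2" "(F2 *v u)$3 = u$3" by (simp_all add: F2_def mat_simps)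
lemma S12v: "(S12 *v u)$1 = u$2" "(S12 *v u)$2 = u$1" "(S12 *v u)$3 = u$3" by (simp_all add: S12_def mat_simps)
lemma S13v: "(S13 *v u)$1 = u$3" "(S13 *v u)$2 = u$2" "(S13 *v u)$3 = u$1" by (simp_all add: S13_def mat_simps)
lemma S23v: "(S23 *v u)$1 = u$1" "(S23 *v u)$2 = u$3" "(S23 *v u)$3 = u$2" by (simp_all add: S23_def mat_simps)
lemma R45v: "(R45 *v u)$1 = (u$1 - u$2) / sqrt 2" "(R45 *v u)$2 = (u$1 + u$2) / sqrt 2" "(R45 *v u)$3 = u$3"
  by (simp_all add: R45_def mat_simps field_simps)


definition Bv where "Bv = E (mon3 2 2 0)"
definition Av where "Av = E (mon3 4 0 0)"

lemma A2: "E (mon3 0 4 0) = Av"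
  unfolding Av_def by (rule E_eq_by[OF orth_S12 cont_mon3]) (simp add: mon3_def S12v)
lemma A3: "E (mon3 0 0 4) = Av"
  unfolding Av_def by (rule E_eq_by[OF orth_S13 cont_mon3]) (simp add: mon3_def S13v)
lemma B13: "E (mon3 2 0 2) = Bv"
  unfolding Bv_def by (rule E_eq_by[OF orth_S23 cont_mon3]) (simp add: mon3_def S23v)
lemma B23: "E (mon3 0 2 2) = Bv"
  unfolding Bv_def by (rule E_eq_by[OF orth_S13 cont_mon3]) (simp add: mon3_def S13v mult.commute)

lemma rot: "E (\<lambda>u. mon3 4 0 0 u - 2 * mon3 2 2 0 u + mon3 0 4 0 u) = 4 * Bv"
proof -
  have "E (\<lambda>u. (mon3 4 0 0 u - 2 * mon3 2 2 0 u + mon3 0 4 0 u) / 4) = E (mon3 2 2 0)"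
    by (rule E_eq_by[OF orth_R45 cont_mon3]) (simp add: mon3_def R45v field_simps power2_eq_square power4_eq_xxxx)
  then show ?thesis unfolding Bv_def by simp
qed

lemma A_eq: "Av = 3 * Bv"
  using rot by (simp add: Esimps A2 Av_def[symmetric] Bv_def[symmetric])

lemma tot: "3 * Av + 6 * Bv = 1"
proof -
  have "E (\<lambda>u. mon3 4 0 0 u + mon3 0 4 0 u + mon3 0 0 4 u + 2 * mon3 2 2 0 u + 2 * mon3 2 0 2 u + 2 * mon3 0 2 2 u) = E (\<lambda>u. 1)"
  proof (rule Econg)
    fix u :: "real^3" assume "u \<in> sphere 0 1"
    from sph3[OF this] have "((u$1)^2 + (u$2)^2 + (u$3)^2)^2 = 1" by simp
    then show "mon3 4 0 0 u + mon3 0 4 0 u + mon3 0 0 4 u + 2 * mon3 2 2 0 u + 2 * mon3 2 0 2 u + 2 * mon3 0 2 2 u = 1"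
      by (simp add: mon3_def power2_eq_square algebra_simps power4_eq_xxxx)
  qed
  then show ?thesis by (simp add: Esimps A2 A3 B13 B23 prob_space.prob_space[OF prob_sigma] Av_def[symmetric] Bv_def[symmetric])
qed

lemma Bv_val: "Bv = 1/15" using A_eq tot by simp
lemma Av_val: "Av = 1/5" using A_eq tot by simp




lemma exhaust_6:
  fixes x :: 6
  shows "x = 1 \<or> x = 2 \<or> x = 3 \<or> x = 4 \<or> x = 5 \<or> x = 6"
proof (induct x)
  case (of_int z)
  then have "z = 0 \<or> z = 1 \<or> z = 2 \<or> z = 3 \<or> z = 4 \<or> z = 5" by fastforce
  then show ?case by auto
qed

lemma UNIV_6: "UNIV = {1, 2, 3, 4, 5, 6::6}"
  using exhaust_6 by auto

lemma sum_6: "sum f (UNIV::6 set) = f 1 + f 2 + f 3 + f 4 + f 5 + f 6"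
  unfolding UNIV_6 by (simp add: ac_simps)

lemma prod_6: "prod f (UNIV::6 set) = f 1 * f 2 * f 3 * f 4 * f 5 * f 6"
  unfolding UNIV_6 by (simp add: ac_simps)

definition gf :: "6 \<Rightarrow> real^3 \<Rightarrow> real" where
  "gf a = (if a = 1 then (\<lambda>u. (u$1)^2 + (u$2)^2 + (u$3)^2)
     else if a = 2 then (\<lambda>u. (u$1)^2 - (u$2)^2)
     else if a = 3 then (\<lambda>u. (u$1)^2 + (u$2)^2 - 2 * (u$3)^2)
     else if a = 4 then (\<lambda>u. u$1 * u$2)
     else if a = 5 then (\<lambda>u. u$1 * u$3) else (\<lambda>u. u$2 * u$3))"

lemma cont_gf [continuous_intros]: "continuous_on S (gf a)"
  using exhaust_6[of a] by (auto simp: gf_def intro!: continuous_intros)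


definition lamv :: "6 \<Rightarrow> real" where
  "lamv a = (if a = 1 then 1 else if a = 2 then 4/15 else if a = 3 then 4/5 else 1/15)"

definition Pval :: "6 \<Rightarrow> 6 \<Rightarrow> real" where
  "Pval a b = (if a = b then lamv a else 0)"

lemma cont_gg: "continuous_on UNIV (\<lambda>u. gf a u * gf b u)"
  by (intro continuous_intros)

lemma P14: "E (\<lambda>u. gf 1 u * gf 4 u) = Pval 1 4"
  unfolding Pval_def by simp (rule E_zero_by[OF orth_F1 cont_gg], simp add: gf_def F1v algebra_simps)

lemma P15: "E (\<lambda>u. gf 1 u * gf 5 u) = Pval 1 5"
  unfolding Pval_def by simp (rule E_zero_by[OF orth_F1 cont_gg], simp add: gf_def F1v algebra_simps)

lemma P16: "E (\<lambda>u. gf 1 u * gf 6 u) = Pval 1 6"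
  unfolding Pval_def by simp (rule E_zero_by[OF orth_F2 cont_gg], simp add: gf_def F2v algebra_simps)

lemma P24: "E (\<lambda>u. gf 2 u * gf 4 u) = Pval 2 4"
  unfolding Pval_def by simp (rule E_zero_by[OF orth_F1 cont_gg], simp add: gf_def F1v algebra_simps)

lemma P25: "E (\<lambda>u. gf 2 u * gf 5 u) = Pval 2 5"
  unfolding Pval_def by simp (rule E_zero_by[OF orth_F1 cont_gg], simp add: gf_def F1v algebra_simps)

lemma P26: "E (\<lambda>u. gf 2 u * gf 6 u) = Pval 2 6"
  unfolding Pval_def by simp (rule E_zero_by[OF orth_F2 cont_gg], simp add: gf_def F2v algebra_simps)

lemma P34: "E (\<lambda>u. gf 3 u * gf 4 u) = Pval 3 4"
  unfolding Pval_def by simp (rule E_zero_by[OF orth_F1 cont_gg], simp add: gf_def F1v algebra_simps)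

lemma P35: "E (\<lambda>u. gf 3 u * gf 5 u) = Pval 3 5"
  unfolding Pval_def by simp (rule E_zero_by[OF orth_F1 cont_gg], simp add: gf_def F1v algebra_simps)

lemma P36: "E (\<lambda>u. gf 3 u * gf 6 u) = Pval 3 6"
  unfolding Pval_def by simp (rule E_zero_by[OF orth_F2 cont_gg], simp add: gf_def F2v algebra_simps)

lemma P45: "E (\<lambda>u. gf 4 u * gf 5 u) = Pval 4 5"
  unfolding Pval_def by simp (rule E_zero_by[OF orth_F2 cont_gg], simp add: gf_def F2v algebra_simps)

lemma P46: "E (\<lambda>u. gf 4 u * gf 6 u) = Pval 4 6"
  unfolding Pval_def by simp (rule E_zero_by[OF orth_F1 cont_gg], simp add: gf_def F1v algebra_simps)

lemma P56: "E (\<lambda>u. gf 5 u * gf 6 u) = Pval 5 6"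
  unfolding Pval_def by simp (rule E_zero_by[OF orth_F1 cont_gg], simp add: gf_def F1v algebra_simps)

lemma P12: "E (\<lambda>u. gf 1 u * gf 2 u) = Pval 1 2"
  unfolding Pval_def by simp (rule E_zero_by[OF orth_S12 cont_gg], simp add: gf_def S12v algebra_simps)

lemma P23: "E (\<lambda>u. gf 2 u * gf 3 u) = Pval 2 3"
  unfolding Pval_def by simp (rule E_zero_by[OF orth_S12 cont_gg], simp add: gf_def S12v algebra_simps)

lemma P13: "E (\<lambda>u. gf 1 u * gf 3 u) = Pval 1 3"
proof -
  have "(\<lambda>u. gf 1 u * gf 3 u) = (\<lambda>u. mon3 4 0 0 u + mon3 0 4 0 u - 2 * mon3 0 0 4 u + 2 * mon3 2 2 0 u - mon3 2 0 2 u - mon3 0 2 2 u)"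
    by (rule ext) (simp add: gf_def mon3_def algebra_simps power2_eq_square power4_eq_xxxx)
  then show ?thesis
    by (simp add: Esimps A2 A3 B13 B23 Av_def[symmetric] Bv_def[symmetric] Av_val Bv_val Pval_def lamv_def)
qed

lemma P22: "E (\<lambda>u. gf 2 u * gf 2 u) = Pval 2 2"
proof -
  have "(\<lambda>u. gf 2 u * gf 2 u) = (\<lambda>u. mon3 4 0 0 u + mon3 0 4 0 u - 2 * mon3 2 2 0 u)"
    by (rule ext) (simp add: gf_def mon3_def algebra_simps power2_eq_square power4_eq_xxxx)
  then show ?thesis
    by (simp add: Esimps A2 A3 B13 B23 Av_def[symmetric] Bv_def[symmetric] Av_val Bv_val Pval_def lamv_def)
qed

lemma P33: "E (\<lambda>u. gf 3 u * gf 3 u) = Pval 3 3"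
proof -
  have "(\<lambda>u. gf 3 u * gf 3 u) = (\<lambda>u. mon3 4 0 0 u + mon3 0 4 0 u + 4 * mon3 0 0 4 u + 2 * mon3 2 2 0 u - 4 * mon3 2 0 2 u - 4 * mon3 0 2 2 u)"
    by (rule ext) (simp add: gf_def mon3_def algebra_simps power2_eq_square power4_eq_xxxx)
  then show ?thesis
    by (simp add: Esimps A2 A3 B13 B23 Av_def[symmetric] Bv_def[symmetric] Av_val Bv_val Pval_def lamv_def)
qed

lemma P44: "E (\<lambda>u. gf 4 u * gf 4 u) = Pval 4 4"
proof -
  have "(\<lambda>u. gf 4 u * gf 4 u) = (\<lambda>u. mon3 2 2 0 u)"
    by (rule ext) (simp add: gf_def mon3_def algebra_simps power2_eq_square power4_eq_xxxx)
  then show ?thesis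
    by (simp add: Esimps A2 A3 B13 B23 Av_def[symmetric] Bv_def[symmetric] Av_val Bv_val Pval_def lamv_def)
qed

lemma P55: "E (\<lambda>u. gf 5 u * gf 5 u) = Pval 5 5"
proof -
  have "(\<lambda>u. gf 5 u * gf 5 u) = (\<lambda>u. mon3 2 0 2 u)"
    by (rule ext) (simp add: gf_def mon3_def algebra_simps power2_eq_square power4_eq_xxxx)
  then show ?thesis
    by (simp add: Esimps A2 A3 B13 B23 Av_def[symmetric] Bv_def[symmetric] Av_val Bv_val Pval_def lamv_def)
qed

lemma P66: "E (\<lambda>u. gf 6 u * gf 6 u) = Pval 6 6"
proof -
  have "(\<lambda>u. gf 6 u * gf 6 u) = (\<lambda>u. mon3 0 2 2 u)"
    by (rule ext) (simp add: gf_def mon3_def algebra_simps power2_eq_square power4_eq_xxxx)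
  then show ?thesis
    by (simp add: Esimps A2 A3 B13 B23 Av_def[symmetric] Bv_def[symmetric] Av_val Bv_val Pval_def lamv_def)
qed

lemma P11: "E (\<lambda>u. gf 1 u * gf 1 u) = Pval 1 1"
proof -
  have "E (\<lambda>u. gf 1 u * gf 1 u) = E (\<lambda>u. 1)"
    by (rule Econg) (simp add: gf_def sph3)
  then show ?thesis using prob_space.prob_space[OF prob_sigma] by (simp add: Pval_def lamv_def)
qed

lemma Esym: "E (\<lambda>u. gf a u * gf b u) = E (\<lambda>u. gf b u * gf a u)"
  by (simp add: mult.commute)

lemma Pall: "E (\<lambda>u. gf a u * gf b u) = Pval a b"
proof -
  note facts = P14 P15 P16 P24 P25 P26 P34 P35 P36 P45 P46 P56 P12 P23 P13 P22 P33 P44 P55 P66 P11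
  note facts2 = facts[THEN trans[OF Esym]]
  have sb: "Pval a b = Pval b a" by (simp add: Pval_def)
  show ?thesis
    using exhaust_6[of a] exhaust_6[of b] by (elim disjE) (simp_all add: facts facts2 Pval_def)
qed




definition vf :: "6 \<Rightarrow> real^3 \<Rightarrow> real" where
  "vf p u = (case pidx p of (i, j) \<Rightarrow> (2 - kdelta i j) * u$i * u$j)"

definition kk :: "6 \<Rightarrow> 6 \<Rightarrow> real" where
  "kk p a = (if p = 1 then (if a = 1 then 1/3 else if a = 2 then 1/2 else if a = 3 then 1/6 else 0)
     else if p = 2 then (if a = 4 then 2 else 0)
     else if p = 3 then (if a = 5 then 2 else 0)
     else if p = 4 then (if a = 1 then 1/3 else if a = 2 then -1/2 else if a = 3 then 1/6 else 0)
     else if p = 5 then (if a = 6 then 2 else 0)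
     else (if a = 1 then 1/3 else if a = 3 then -1/3 else 0))"

definition Kp :: "real^6^6" where "Kp = (\<chi> p a. kk p a)"

definition Mm :: "(real^3) measure \<Rightarrow> real^6^6" where
  "Mm s = (\<chi> p q. integral\<^sup>L s (\<lambda>u. vf p u * vf q u))"

definition Pm :: "(real^3) measure \<Rightarrow> real^6^6" where
  "Pm s = (\<chi> a b. integral\<^sup>L s (\<lambda>u. gf a u * gf b u))"

lemma vK: "vf p u = (\<Sum>a\<in>UNIV. kk p a * gf a u)"
  using exhaust_6[of p]
  by (elim disjE) (simp_all add: sum_6 vf_def kk_def gf_def pidx_def kdelta_def algebra_simps power2_eq_square)

lemma MKP:
  assumes fm: "finite_measure s" and ss: "sets s = sets S2_space"
  shows "Mm s = Kp ** Pm s ** transpose Kp"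
proof -
  have int: "integrable s (\<lambda>u. c * (gf a u * gf b u))" for c a b
    by (rule integrable_S2[OF fm ss]) (intro continuous_intros)
  have "integral\<^sup>L s (\<lambda>u. vf p u * vf q u) = (\<Sum>b\<in>UNIV. (\<Sum>a\<in>UNIV. kk p a * integral\<^sup>L s (\<lambda>u. gf a u * gf b u)) * kk q b)" for p q
  proof -
    have "(\<lambda>u. vf p u * vf q u) = (\<lambda>u. \<Sum>b\<in>UNIV. \<Sum>a\<in>UNIV. (kk p a * kk q b) * (gf a u * gf b u))"
    proof (rule ext)
      fix u
      have "vf p u * vf q u = (\<Sum>a\<in>UNIV. \<Sum>b\<in>UNIV. (kk p a * gf a u) * (kk q b * gf b u))"
        by (simp add: vK sum_product)
      also have "\<dots> = (\<Sum>b\<in>UNIV. \<Sum>a\<in>UNIV. (kk p a * gf a u) * (kk q b * gf b u))"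
        by (rule sum.swap)
      finally show "vf p u * vf q u = (\<Sum>b\<in>UNIV. \<Sum>a\<in>UNIV. (kk p a * kk q b) * (gf a u * gf b u))"
        by (simp add: algebra_simps)
    qed
    then have "integral\<^sup>L s (\<lambda>u. vf p u * vf q u) = (\<Sum>b\<in>UNIV. \<Sum>a\<in>UNIV. integral\<^sup>L s (\<lambda>u. (kk p a * kk q b) * (gf a u * gf b u)))"
    proof -
      have "integral\<^sup>L s (\<lambda>u. \<Sum>b\<in>UNIV. \<Sum>a\<in>UNIV. (kk p a * kk q b) * (gf a u * gf b u))
          = (\<Sum>b\<in>UNIV. integral\<^sup>L s (\<lambda>u. \<Sum>a\<in>UNIV. (kk p a * kk q b) * (gf a u * gf b u)))"
        by (rule Bochner_Integration.integral_sum) (rule integrable_S2[OF fm ss], intro continuous_intros)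
      also have "\<dots> = (\<Sum>b\<in>UNIV. \<Sum>a\<in>UNIV. integral\<^sup>L s (\<lambda>u. (kk p a * kk q b) * (gf a u * gf b u)))"
        by (intro sum.cong refl Bochner_Integration.integral_sum int)
      finally show ?thesis using \<open>(\<lambda>u. vf p u * vf q u) = _\<close> by simp
    qed
    also have "\<dots> = (\<Sum>b\<in>UNIV. (\<Sum>a\<in>UNIV. kk p a * integral\<^sup>L s (\<lambda>u. gf a u * gf b u)) * kk q b)"
      unfolding integral_mult_right_zero by (simp add: sum_distrib_left sum_distrib_right mult_ac)
    finally show ?thesis .
  qed
  then show ?thesis
    by (simp add: Mm_def Pm_def Kp_def matrix_matrix_mult_def transpose_def vec_eq_iff)
qed




lemma Pm_sym: "transpose (Pm s) = Pm s"
  by (simp add: Pm_def transpose_def vec_eq_iff mult.commute)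

lemma Pm_psd:
  assumes fm: "finite_measure s" and ss: "sets s = sets S2_space"
  shows "psd (Pm s)"
  unfolding psd_def
proof
  fix x :: "real^6"
  have int: "integrable s (\<lambda>u. c * (gf a u * gf b u))" for c a b
    by (rule integrable_S2[OF fm ss]) (intro continuous_intros)
  have "x \<bullet> (Pm s *v x) = (\<Sum>a\<in>UNIV. \<Sum>b\<in>UNIV. integral\<^sup>L s (\<lambda>u. (x$a * x$b) * (gf a u * gf b u)))"
    unfolding integral_mult_right_zero
    by (simp add: Pm_def inner_vec_def matrix_vector_mult_def sum_distrib_left mult_ac)
  also have "\<dots> = (\<Sum>a\<in>UNIV. integral\<^sup>L s (\<lambda>u. \<Sum>b\<in>UNIV. (x$a * x$b) * (gf a u * gf b u)))"
    by (intro sum.cong refl Bochner_Integration.integral_sum[symmetric] int)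
  also have "\<dots> = integral\<^sup>L s (\<lambda>u. \<Sum>a\<in>UNIV. \<Sum>b\<in>UNIV. (x$a * x$b) * (gf a u * gf b u))"
    by (rule Bochner_Integration.integral_sum[symmetric]) (rule integrable_S2[OF fm ss], intro continuous_intros)
  also have "\<dots> = integral\<^sup>L s (\<lambda>u. (\<Sum>a\<in>UNIV. x$a * gf a u)^2)"
    by (simp add: power2_eq_square sum_product mult_ac)
  also have "\<dots> \<ge> 0" by (rule Bochner_Integration.integral_nonneg) simp
  finally show "0 \<le> x \<bullet> (Pm s *v x)" .
qed

definition wv :: "6 \<Rightarrow> real" where "wv a = 1 / lamv a"

lemma wv_pos: "wv a > 0" by (simp add: wv_def lamv_def)

lemma trace_id:
  assumes ps: "prob_space s" and ss: "sets s = sets S2_space"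
  shows "(\<Sum>a\<in>UNIV. wv a * Pm s $ a $ a) = 6"
proof -
  have fm: "finite_measure s" using ps by (rule prob_space.finite_measure)
  have sp: "space s = sphere 0 1" using ss space_S2 by (metis sets_eq_imp_space_eq)
  have "(\<Sum>a\<in>UNIV. wv a * Pm s $ a $ a) = (\<Sum>a\<in>UNIV. integral\<^sup>L s (\<lambda>u. wv a * (gf a u * gf a u)))"
    by (simp add: Pm_def)
  also have "\<dots> = integral\<^sup>L s (\<lambda>u. \<Sum>a\<in>UNIV. wv a * (gf a u * gf a u))"
    by (rule Bochner_Integration.integral_sum[symmetric]) (rule integrable_S2[OF fm ss], intro continuous_intros)
  also have "\<dots> = integral\<^sup>L s (\<lambda>u. 6)"
  proof (rule Bochner_Integration.integral_cong[OF refl])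
    fix u assume "u \<in> space s"
    then have "(u$1)^2 + (u$2)^2 + (u$3)^2 = 1" using sp sph3 by auto
    then have h: "((u$1)^2 + (u$2)^2 + (u$3)^2)^2 = 1" by simp
    have "(\<Sum>a\<in>UNIV. wv a * (gf a u * gf a u)) = 6 * ((u$1)^2 + (u$2)^2 + (u$3)^2)^2"
      by (simp add: sum_6 wv_def lamv_def gf_def field_simps power2_eq_square)
    then show "(\<Sum>a\<in>UNIV. wv a * (gf a u * gf a u)) = 6" using h by simp
  qed
  also have "\<dots> = 6" using prob_space.prob_space[OF ps] by simp
  finally show ?thesis .
qed

lemma detP_le:
  assumes ps: "prob_space s" and ss: "sets s = sets S2_space"
  shows "det (Pm s) \<le> (\<Prod>a\<in>UNIV. lamv a)"
proof -
  have fm: "finite_measure s" using ps by (rule prob_space.finite_measure)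
  have psd: "psd (Pm s)" by (rule Pm_psd[OF fm ss])
  have "det (Pm s) \<le> (\<Prod>a\<in>UNIV. Pm s $ a $ a)" by (rule hadamard[OF Pm_sym psd])
  also have "\<dots> = (\<Prod>a\<in>UNIV. wv a * Pm s $ a $ a) * (\<Prod>a\<in>UNIV. lamv a)"
    by (simp add: prod.distrib[symmetric] wv_def lamv_def)
  also have "\<dots> \<le> 1 * (\<Prod>a\<in>UNIV. lamv a)"
  proof (rule mult_right_mono)
    show "(\<Prod>a\<in>UNIV. wv a * Pm s $ a $ a) \<le> 1"
      by (rule amgm_simple) (use trace_id[OF ps ss] wv_pos psd_diag[OF psd] in \<open>auto intro: mult_nonneg_nonneg less_imp_le\<close>)
    show "0 \<le> (\<Prod>a\<in>UNIV. lamv a)" by (intro prod_nonneg) (simp add: lamv_def)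
  qed
  finally show ?thesis by simp
qed

lemma Pm_sigma: "Pm sphere_uniform = (\<chi> a b. Pval a b)"
  by (simp add: Pm_def vec_eq_iff Pall)

lemma detP_sigma: "det (Pm sphere_uniform) = (\<Prod>a\<in>UNIV. lamv a)"
  unfolding Pm_sigma by (subst det_diagonal) (simp_all add: Pval_def)

lemma detM_le:
  assumes ps: "prob_space s" and ss: "sets s = sets S2_space"
  shows "det (Mm s) \<le> det (Mm sphere_uniform)"
proof -
  have fm: "finite_measure s" using ps by (rule prob_space.finite_measure)
  have fms: "finite_measure sphere_uniform" using prob_sigma by (rule prob_space.finite_measure)
  have "det (Mm s) = (det Kp)^2 * det (Pm s)"
    by (simp add: MKP[OF fm ss] det_mul power2_eq_square)
  also have "\<dots> \<le> (det Kp)^2 * det (Pm sphere_uniform)"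
    using detP_le[OF ps ss] detP_sigma by (intro mult_left_mono) simp_all
  also have "\<dots> = det (Mm sphere_uniform)"
    by (simp add: MKP[OF fms sets_sigma] det_mul power2_eq_square)
  finally show ?thesis .
qed




lemma sum_delta_mult1: fixes f :: "'n::finite \<Rightarrow> real" shows "(\<Sum>k\<in>UNIV. (if i = k then c else 0) * f k) = c * (f i :: real)"
proof -
  have "(\<Sum>k\<in>UNIV. (if i = k then c else 0) * f k) = (\<Sum>k\<in>UNIV. if k = i then c * f k else 0)"
    by (rule sum.cong) auto
  then show ?thesis by simp
qed

lemma sum_delta_mult2: fixes f :: "'n::finite \<Rightarrow> real" shows "(\<Sum>k\<in>UNIV. c * (if i = k then 1 else 0) * f k) = c * (f i :: real)"
proof -
  have "(\<Sum>k\<in>UNIV. c * (if i = k then 1 else 0) * f k) = (\<Sum>k\<in>UNIV. if k = i then c * f k else 0)"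
    by (rule sum.cong) auto
  then show ?thesis by simp
qed

lemma det_scaleR6: "det (c *\<^sub>R (A::real^6^6)) = c^6 * det A"
proof -
  have "(mat c ** A) $ i $ j = c * A $ i $ j" for i j
  proof -
    show ?thesis by (simp add: matrix_matrix_mult_def mat_def sum_delta_mult1)
  qed
  then have "c *\<^sub>R A = mat c ** A" by (simp add: vec_eq_iff)
  moreover have "det (mat c :: real^6^6) = c^6"
    by (subst det_diagonal) (simp_all add: mat_def)
  ultimately show ?thesis by (simp add: det_mul)
qed

lemma Jmat_eq:
  fixes \<gamma> b \<rho> \<eta> :: real and D :: "real^3^3"
  assumes D: "D = \<gamma> *\<^sub>R mat 1" and ss: "sets s = sets S2_space"
  shows "Jmat b \<rho> \<eta> D s = rician_w (exp (- b * \<gamma>) * \<rho> / \<eta>) *\<^sub>R Mm s"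
proof -
  let ?c = "rician_w (exp (- b * \<gamma>) * \<rho> / \<eta>)"
  have sp: "space s = sphere 0 1" using ss space_S2 by (metis sets_eq_imp_space_eq)
  have q: "u \<bullet> (D *v u) = \<gamma>" if "u \<in> space s" for u
  proof -
    have "norm u = 1" using that sp by simp
    then have "u \<bullet> u = 1" by (simp add: dot_square_norm)
    have "((\<gamma> *\<^sub>R mat 1) *v u) $ k = \<gamma> * u $ k" for k
    proof -
      show ?thesis by (simp add: matrix_vector_mult_def mat_def sum_delta_mult2)
    qed
    then have "(\<gamma> *\<^sub>R mat 1) *v u = \<gamma> *\<^sub>R u" by (simp add: vec_eq_iff)
    then show ?thesis using \<open>u \<bullet> u = 1\<close> by (simp add: D)
  qed
  have "Jmat b \<rho> \<eta> D s $ p $ q = ?c * Mm s $ p $ q" for p q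
  proof -
    obtain i j where ij: "pidx p = (i, j)" by (cases "pidx p")
    obtain l r where lr: "pidx q = (l, r)" by (cases "pidx q")
    have "integral\<^sup>L s (\<lambda>u. rician_w (exp (- b * (u \<bullet> (D *v u))) * \<rho> / \<eta>) * u$i * u$j * u$l * u$r)
        = integral\<^sup>L s (\<lambda>u. ?c * (u$i * u$j * u$l * u$r))"
      by (rule Bochner_Integration.integral_cong[OF refl]) (simp add: q mult_ac)
    moreover have "integral\<^sup>L s (\<lambda>u. vf p u * vf q u)
        = integral\<^sup>L s (\<lambda>u. ((2 - kdelta i j) * (2 - kdelta l r)) * (u$i * u$j * u$l * u$r))"
      by (rule Bochner_Integration.integral_cong[OF refl]) (simp add: vf_def ij lr mult_ac)
    ultimately show ?thesis
      by (simp add: Jmat_def Mm_def ij lr)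
  qed
  then show ?thesis by (simp add: vec_eq_iff)
qed

theorem proposition6p1:
  fixes \<gamma> b \<rho> \<eta> :: real and D :: "real^3^3"
  assumes "D = \<gamma> *\<^sub>R mat 1" and "\<gamma> > 0"
    and "b > 0" and "\<rho> > 0" and "\<eta> > 0"
  shows "prob_space sphere_uniform \<and> sets sphere_uniform = sets S2_space \<and>
    (\<forall>s. prob_space s \<and> sets s = sets S2_space \<longrightarrow>
        det (Jmat b \<rho> \<eta> D s) \<le> det (Jmat b \<rho> \<eta> D sphere_uniform))"
proof (intro conjI allI impI prob_sigma sets_sigma, elim conjE)
  fix s :: "(real^3) measure"
  assume ps: "prob_space s" and ss: "sets s = sets S2_space"
  let ?c = "rician_w (exp (- b * \<gamma>) * \<rho> / \<eta>)"
  have c6: "0 \<le> ?c ^ 6"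
  proof -
    have "?c ^ 6 = (?c ^ 3)^2" by (simp add: power_mult[symmetric])
    then show ?thesis by simp
  qed
  have "det (Jmat b \<rho> \<eta> D s) = ?c ^ 6 * det (Mm s)"
    by (simp add: Jmat_eq[OF assms(1) ss] det_scaleR6)
  also have "\<dots> \<le> ?c ^ 6 * det (Mm sphere_uniform)"
    by (rule mult_left_mono[OF detM_le[OF ps ss] c6])
  also have "\<dots> = det (Jmat b \<rho> \<eta> D sphere_uniform)"
    by (simp add: Jmat_eq[OF assms(1) sets_sigma] det_scaleR6)
  finally show "det (Jmat b \<rho> \<eta> D s) \<le> det (Jmat b \<rho> \<eta> D sphere_uniform)" .
qed


end
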